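(* Let $R$ be a ring and $G$ a group such that the group ring $RG$ is a DT ring. Then $1-g^2\in\Delta(RG)$ for every $g\in G$.
   Context: All rings are associative with identity; $U(R)$ is the group of units. $\Delta(R)=\{x\in R: x+u\in U(R)\text{ for all }u\in U(R)\}$. $\mathrm{Tr}(R)=\{x\in R: x^3=x\}$. A ring $R$ is a DT ring if every $r\in R$ can be written $r=e+d$ with $e\in\mathrm{Tr}(R)$ and $d\in\Delta(R)$. $RG$ denotes the group ring. *)

theory Defs
  imports "HOL-Algebra.Algebra"
begin

text \<open>The group ring RG of a ring R over a (not necessarily finite) group G:
  finitely supported functions from carrier G to carrier R (taking the value zero
  outside carrier G), with pointwise addition and convolution product.\<close>

definition group_ring :: "('r, 'a) ring_scheme \<Rightarrow> ('g, 'b) monoid_scheme \<Rightarrow> ('g \<Rightarrow> 'r) ring" where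
  "group_ring R G =
    \<lparr> carrier = {f. (\<forall>x\<in>carrier G. f x \<in> carrier R)
                   \<and> (\<forall>x. x \<notin> carrier G \<longrightarrow> f x = \<zero>\<^bsub>R\<^esub>)
                   \<and> finite {x \<in> carrier G. f x \<noteq> \<zero>\<^bsub>R\<^esub>}},
      monoid.mult = (\<lambda>f h x. if x \<in> carrier G then
          (\<Oplus>\<^bsub>R\<^esub> a \<in> {a \<in> carrier G. f a \<noteq> \<zero>\<^bsub>R\<^esub>}. f a \<otimes>\<^bsub>R\<^esub> h (inv\<^bsub>G\<^esub> a \<otimes>\<^bsub>G\<^esub> x))
          else \<zero>\<^bsub>R\<^esub>),
      monoid.one = (\<lambda>x. if x = \<one>\<^bsub>G\<^esub> then \<one>\<^bsub>R\<^esub> else \<zero>\<^bsub>R\<^esub>),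
      ring.zero = (\<lambda>x. \<zero>\<^bsub>R\<^esub>),
      ring.add = (\<lambda>f h x. f x \<oplus>\<^bsub>R\<^esub> h x) \<rparr>"

definition gr_elem :: "('r, 'a) ring_scheme \<Rightarrow> 'g \<Rightarrow> ('g \<Rightarrow> 'r)" where
  "gr_elem R g = (\<lambda>x. if x = g then \<one>\<^bsub>R\<^esub> else \<zero>\<^bsub>R\<^esub>)"

definition Delta :: "('a, 'b) ring_scheme \<Rightarrow> 'a set" where
  "Delta S = {x \<in> carrier S. \<forall>u \<in> Units S. x \<oplus>\<^bsub>S\<^esub> u \<in> Units S}"

definition Tr :: "('a, 'b) ring_scheme \<Rightarrow> 'a set" where
  "Tr S = {x \<in> carrier S. x [^]\<^bsub>S\<^esub> (3::nat) = x}"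

definition DT_ring :: "('a, 'b) ring_scheme \<Rightarrow> bool" where
  "DT_ring S \<longleftrightarrow> (\<forall>r \<in> carrier S. \<exists>e \<in> Tr S. \<exists>d \<in> Delta S. r = e \<oplus>\<^bsub>S\<^esub> d)"

end

theory Submission imports Defs begin
locale grp_ring = R?: ring R + G?: group G
  for R :: "('r,'a) ring_scheme" and G :: "('g,'b) monoid_scheme"
begin
definition supp :: "('g \<Rightarrow> 'r) \<Rightarrow> 'g set" where
  "supp f = {x \<in> carrier G. f x \<noteq> \<zero>\<^bsub>R\<^esub>}"

abbreviation S where "S \<equiv> group_ring R G"

lemma S_carrier: "f \<in> carrier S \<longleftrightarrow> (\<forall>x\<in>carrier G. f x \<in> carrier R) \<and> (\<forall>x. x \<notin> carrier G \<longrightarrow> f x = \<zero>\<^bsub>R\<^esub>) \<and> finite (supp f)"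
  by (simp add: group_ring_def supp_def)
lemma S_mult: "f \<otimes>\<^bsub>S\<^esub> h = (\<lambda>x. if x \<in> carrier G then (\<Oplus>\<^bsub>R\<^esub> a \<in> supp f. f a \<otimes>\<^bsub>R\<^esub> h (inv\<^bsub>G\<^esub> a \<otimes>\<^bsub>G\<^esub> x)) else \<zero>\<^bsub>R\<^esub>)"
  unfolding supp_def group_ring_def by simp
lemma S_add: "f \<oplus>\<^bsub>S\<^esub> h = (\<lambda>x. f x \<oplus>\<^bsub>R\<^esub> h x)"
  by (simp add: group_ring_def)
lemma S_zero: "\<zero>\<^bsub>S\<^esub> = (\<lambda>x. \<zero>\<^bsub>R\<^esub>)"
  by (simp add: group_ring_def)
lemma S_one: "\<one>\<^bsub>S\<^esub> = gr_elem R \<one>\<^bsub>G\<^esub>"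
  by (simp add: group_ring_def gr_elem_def)

lemma supp_sub: "supp f \<subseteq> carrier G" by (auto simp: supp_def)

lemma S_in: "f \<in> carrier S \<Longrightarrow> x \<in> carrier G \<Longrightarrow> f x \<in> carrier R"
  by (simp add: S_carrier)
lemma S_out: "f \<in> carrier S \<Longrightarrow> x \<notin> carrier G \<Longrightarrow> f x = \<zero>\<^bsub>R\<^esub>"
  by (simp add: S_carrier)
lemma S_fin: "f \<in> carrier S \<Longrightarrow> finite (supp f)"
  by (simp add: S_carrier)

lemma conv:
  assumes f: "f \<in> carrier S" and h: "h \<in> carrier S" and A: "finite A" "supp f \<subseteq> A" "A \<subseteq> carrier G"
    and x: "x \<in> carrier G"
  shows "(f \<otimes>\<^bsub>S\<^esub> h) x = (\<Oplus>\<^bsub>R\<^esub> a \<in> A. f a \<otimes>\<^bsub>R\<^esub> h (inv\<^bsub>G\<^esub> a \<otimes>\<^bsub>G\<^esub> x))"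
proof -
  have "(f \<otimes>\<^bsub>S\<^esub> h) x = (\<Oplus>\<^bsub>R\<^esub> a \<in> supp f. f a \<otimes>\<^bsub>R\<^esub> h (inv\<^bsub>G\<^esub> a \<otimes>\<^bsub>G\<^esub> x))"
    using x by (simp add: S_mult)
  also have "\<dots> = (\<Oplus>\<^bsub>R\<^esub> a \<in> A. f a \<otimes>\<^bsub>R\<^esub> h (inv\<^bsub>G\<^esub> a \<otimes>\<^bsub>G\<^esub> x))"
  proof (rule R.add.finprod_mono_neutral_cong_left[OF A(1,2)])
    fix i assume "i \<in> A - supp f"
    then show "f i \<otimes>\<^bsub>R\<^esub> h (inv\<^bsub>G\<^esub> i \<otimes>\<^bsub>G\<^esub> x) = \<zero>\<^bsub>R\<^esub>"
      using A(3) x h by (auto simp: supp_def intro!: R.l_null S_in G.m_closed G.inv_closed)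
  next
    show "(\<lambda>a. f a \<otimes>\<^bsub>R\<^esub> h (inv\<^bsub>G\<^esub> a \<otimes>\<^bsub>G\<^esub> x)) \<in> A \<rightarrow> carrier R"
      using A(3) x h f by (auto intro!: R.m_closed simp: S_carrier subsetD)
  qed simp
  finally show ?thesis .
qed

lemma finsum_swap:
  assumes "finite A" "finite B" "\<And>a b. a \<in> A \<Longrightarrow> b \<in> B \<Longrightarrow> \<phi> a b \<in> carrier R"
  shows "(\<Oplus>\<^bsub>R\<^esub> a \<in> A. (\<Oplus>\<^bsub>R\<^esub> b \<in> B. \<phi> a b)) = (\<Oplus>\<^bsub>R\<^esub> b \<in> B. (\<Oplus>\<^bsub>R\<^esub> a \<in> A. \<phi> a b))"
  using assms
proof (induction A rule: finite_induct)
  case empty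
  then show ?case by (simp add: R.finsum_zero)
next
  case (insert x F)
  have "(\<Oplus>\<^bsub>R\<^esub> a \<in> insert x F. (\<Oplus>\<^bsub>R\<^esub> b \<in> B. \<phi> a b)) = (\<Oplus>\<^bsub>R\<^esub> b \<in> B. \<phi> x b) \<oplus>\<^bsub>R\<^esub> (\<Oplus>\<^bsub>R\<^esub> a \<in> F. (\<Oplus>\<^bsub>R\<^esub> b \<in> B. \<phi> a b))"
    using insert by (subst R.finsum_insert) (auto intro!: R.finsum_closed)
  also have "\<dots> = (\<Oplus>\<^bsub>R\<^esub> b \<in> B. \<phi> x b) \<oplus>\<^bsub>R\<^esub> (\<Oplus>\<^bsub>R\<^esub> b \<in> B. (\<Oplus>\<^bsub>R\<^esub> a \<in> F. \<phi> a b))"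
    using insert by simp
  also have "\<dots> = (\<Oplus>\<^bsub>R\<^esub> b \<in> B. \<phi> x b \<oplus>\<^bsub>R\<^esub> (\<Oplus>\<^bsub>R\<^esub> a \<in> F. \<phi> a b))"
    using insert by (subst R.finsum_addf) (auto intro!: R.finsum_closed)
  also have "\<dots> = (\<Oplus>\<^bsub>R\<^esub> b \<in> B. (\<Oplus>\<^bsub>R\<^esub> a \<in> insert x F. \<phi> a b))"
    using insert by (intro R.finsum_cong) (auto intro!: R.finsum_closed simp: R.finsum_insert)
  finally show ?case .
qed

lemma S_val: "f \<in> carrier S \<Longrightarrow> f x \<in> carrier R"
  by (cases "x \<in> carrier G") (auto simp: S_carrier)

lemma gr_elem_carrier: "g \<in> carrier G \<Longrightarrow> gr_elem R g \<in> carrier S"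
proof -
  assume g: "g \<in> carrier G"
  have "supp (gr_elem R g) \<subseteq> {g}" by (auto simp: supp_def gr_elem_def)
  then have "finite (supp (gr_elem R g))" using finite_subset by blast
  then show ?thesis using g by (auto simp: S_carrier gr_elem_def)
qed

lemma one_carrier: "\<one>\<^bsub>S\<^esub> \<in> carrier S"
  by (simp add: S_one gr_elem_carrier)

lemma gr_elem_mult_left:
  assumes g: "g \<in> carrier G" and f: "f \<in> carrier S"
  shows "gr_elem R g \<otimes>\<^bsub>S\<^esub> f = (\<lambda>x. if x \<in> carrier G then f (inv\<^bsub>G\<^esub> g \<otimes>\<^bsub>G\<^esub> x) else \<zero>\<^bsub>R\<^esub>)"
proof
  fix x
  show "(gr_elem R g \<otimes>\<^bsub>S\<^esub> f) x = (if x \<in> carrier G then f (inv\<^bsub>G\<^esub> g \<otimes>\<^bsub>G\<^esub> x) else \<zero>\<^bsub>R\<^esub>)"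
  proof (cases "x \<in> carrier G")
    case True
    have "(gr_elem R g \<otimes>\<^bsub>S\<^esub> f) x = (\<Oplus>\<^bsub>R\<^esub> a \<in> {g}. gr_elem R g a \<otimes>\<^bsub>R\<^esub> f (inv\<^bsub>G\<^esub> a \<otimes>\<^bsub>G\<^esub> x))"
      by (rule conv) (use g f True gr_elem_carrier in \<open>auto simp: supp_def gr_elem_def\<close>)
    also have "\<dots> = f (inv\<^bsub>G\<^esub> g \<otimes>\<^bsub>G\<^esub> x)"
      using g f True by (simp add: gr_elem_def S_val)
    finally show ?thesis using True by simp
  next
    case False
    then show ?thesis by (simp add: S_mult)
  qed
qed

lemma gr_elem_mult:
  assumes g: "g \<in> carrier G" and h: "h \<in> carrier G"
  shows "gr_elem R g \<otimes>\<^bsub>S\<^esub> gr_elem R h = gr_elem R (g \<otimes>\<^bsub>G\<^esub> h)"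
proof -
  have "\<And>x. x \<in> carrier G \<Longrightarrow> (inv\<^bsub>G\<^esub> g \<otimes>\<^bsub>G\<^esub> x = h) = (x = g \<otimes>\<^bsub>G\<^esub> h)"
    using g h by (metis G.inv_closed G.inv_solve_left G.m_closed)
  then show ?thesis using g h unfolding gr_elem_mult_left[OF g gr_elem_carrier[OF h]]
    by (auto simp: gr_elem_def fun_eq_iff)
qed

lemma l_one_S: "f \<in> carrier S \<Longrightarrow> \<one>\<^bsub>S\<^esub> \<otimes>\<^bsub>S\<^esub> f = f"
  by (auto simp: S_one gr_elem_mult_left fun_eq_iff S_out)

lemma r_one_S:
  assumes f: "f \<in> carrier S"
  shows "f \<otimes>\<^bsub>S\<^esub> \<one>\<^bsub>S\<^esub> = f"
proof
  fix x
  show "(f \<otimes>\<^bsub>S\<^esub> \<one>\<^bsub>S\<^esub>) x = f x"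
  proof (cases "x \<in> carrier G")
    case True
    have "(f \<otimes>\<^bsub>S\<^esub> \<one>\<^bsub>S\<^esub>) x = (\<Oplus>\<^bsub>R\<^esub> a \<in> insert x (supp f). f a \<otimes>\<^bsub>R\<^esub> \<one>\<^bsub>S\<^esub> (inv\<^bsub>G\<^esub> a \<otimes>\<^bsub>G\<^esub> x))"
      by (rule conv) (use f True one_carrier supp_sub in \<open>auto simp: S_fin\<close>)
    also have "\<dots> = (\<Oplus>\<^bsub>R\<^esub> a \<in> insert x (supp f). if x = a then f a else \<zero>\<^bsub>R\<^esub>)"
    proof (rule R.finsum_cong')
      fix a assume a: "a \<in> insert x (supp f)"
      then have aG: "a \<in> carrier G" using True supp_sub by blast
      have "(inv\<^bsub>G\<^esub> a \<otimes>\<^bsub>G\<^esub> x = \<one>\<^bsub>G\<^esub>) = (x = a)"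
        using aG True by (metis G.inv_closed G.inv_solve_left G.one_closed G.r_one)
      then show "f a \<otimes>\<^bsub>R\<^esub> \<one>\<^bsub>S\<^esub> (inv\<^bsub>G\<^esub> a \<otimes>\<^bsub>G\<^esub> x) = (if x = a then f a else \<zero>\<^bsub>R\<^esub>)"
        using f by (auto simp: S_one gr_elem_def S_val)
    qed (auto simp: S_val f)
    also have "\<dots> = f x"
      by (rule R.finsum_singleton) (auto simp: S_fin f S_val)
    finally show ?thesis .
  next
    case False
    then show ?thesis by (simp add: S_mult S_out f)
  qed
qed

lemma add_carrier:
  assumes f: "f \<in> carrier S" and h: "h \<in> carrier S"
  shows "f \<oplus>\<^bsub>S\<^esub> h \<in> carrier S"
proof -
  have "supp (f \<oplus>\<^bsub>S\<^esub> h) \<subseteq> supp f \<union> supp h"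
    using f h by (auto simp: supp_def S_add S_val)
  then have "finite (supp (f \<oplus>\<^bsub>S\<^esub> h))" using f h S_fin finite_subset by blast
  then show ?thesis using f h by (auto simp: S_carrier S_add)
qed

lemma zero_carrier: "\<zero>\<^bsub>S\<^esub> \<in> carrier S"
  by (auto simp: S_carrier S_zero supp_def)

lemma abelian_group_S: "abelian_group S"
proof (rule abelian_groupI)
  fix f h assume "f \<in> carrier S" "h \<in> carrier S"
  then show "f \<oplus>\<^bsub>S\<^esub> h \<in> carrier S" by (rule add_carrier)
next
  show "\<zero>\<^bsub>S\<^esub> \<in> carrier S" by (rule zero_carrier)
next
  fix f h k assume "f \<in> carrier S" "h \<in> carrier S" "k \<in> carrier S"
  then show "f \<oplus>\<^bsub>S\<^esub> h \<oplus>\<^bsub>S\<^esub> k = f \<oplus>\<^bsub>S\<^esub> (h \<oplus>\<^bsub>S\<^esub> k)"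
    by (auto simp: S_add fun_eq_iff S_val R.a_assoc)
next
  fix f h assume "f \<in> carrier S" "h \<in> carrier S"
  then show "f \<oplus>\<^bsub>S\<^esub> h = h \<oplus>\<^bsub>S\<^esub> f"
    by (auto simp: S_add fun_eq_iff S_val R.a_comm)
next
  fix f assume "f \<in> carrier S"
  then show "\<zero>\<^bsub>S\<^esub> \<oplus>\<^bsub>S\<^esub> f = f"
    by (auto simp: S_add S_zero fun_eq_iff S_val)
next
  fix f assume f: "f \<in> carrier S"
  define y where "y = (\<lambda>x. \<ominus>\<^bsub>R\<^esub> f x)"
  have "supp y = supp f"
    using f by (auto simp: supp_def y_def S_val)
  then have "y \<in> carrier S" using f by (auto simp: S_carrier y_def)
  moreover have "y \<oplus>\<^bsub>S\<^esub> f = \<zero>\<^bsub>S\<^esub>"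
    using f by (auto simp: S_add S_zero fun_eq_iff S_val y_def R.l_neg)
  ultimately show "\<exists>y\<in>carrier S. y \<oplus>\<^bsub>S\<^esub> f = \<zero>\<^bsub>S\<^esub>" by blast
qed

definition P where "P f h = (\<lambda>(a,b). a \<otimes>\<^bsub>G\<^esub> b) ` (supp f \<times> supp h)"

lemma P_fin: "f \<in> carrier S \<Longrightarrow> h \<in> carrier S \<Longrightarrow> finite (P f h)"
  by (simp add: P_def S_fin)

lemma P_sub: "P f h \<subseteq> carrier G"
  by (auto simp: P_def supp_def)

lemma supp_mult:
  assumes f: "f \<in> carrier S" and h: "h \<in> carrier S"
  shows "supp (f \<otimes>\<^bsub>S\<^esub> h) \<subseteq> P f h"
proof
  fix x assume x: "x \<in> supp (f \<otimes>\<^bsub>S\<^esub> h)"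
  then have xG: "x \<in> carrier G" by (simp add: supp_def)
  show "x \<in> P f h"
  proof (rule ccontr)
    assume nP: "x \<notin> P f h"
    have "(f \<otimes>\<^bsub>S\<^esub> h) x = (\<Oplus>\<^bsub>R\<^esub> a \<in> supp f. \<zero>\<^bsub>R\<^esub>)"
    proof -
      have "(f \<otimes>\<^bsub>S\<^esub> h) x = (\<Oplus>\<^bsub>R\<^esub> a \<in> supp f. f a \<otimes>\<^bsub>R\<^esub> h (inv\<^bsub>G\<^esub> a \<otimes>\<^bsub>G\<^esub> x))"
        using xG by (simp add: S_mult)
      also have "\<dots> = (\<Oplus>\<^bsub>R\<^esub> a \<in> supp f. \<zero>\<^bsub>R\<^esub>)"
      proof (rule R.finsum_cong')
        fix a assume a: "a \<in> supp f"
        then have aG: "a \<in> carrier G" by (simp add: supp_def)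
        have "h (inv\<^bsub>G\<^esub> a \<otimes>\<^bsub>G\<^esub> x) = \<zero>\<^bsub>R\<^esub>"
        proof (rule ccontr)
          assume "h (inv\<^bsub>G\<^esub> a \<otimes>\<^bsub>G\<^esub> x) \<noteq> \<zero>\<^bsub>R\<^esub>"
          then have "inv\<^bsub>G\<^esub> a \<otimes>\<^bsub>G\<^esub> x \<in> supp h" using aG xG by (simp add: supp_def)
          moreover have "a \<otimes>\<^bsub>G\<^esub> (inv\<^bsub>G\<^esub> a \<otimes>\<^bsub>G\<^esub> x) = x"
            using aG xG by (simp add: G.m_assoc[symmetric])
          ultimately have "x \<in> P f h" using a unfolding P_def by force
          then show False using nP by blast
        qed
        then show "f a \<otimes>\<^bsub>R\<^esub> h (inv\<^bsub>G\<^esub> a \<otimes>\<^bsub>G\<^esub> x) = \<zero>\<^bsub>R\<^esub>"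
          using f by (simp add: S_val)
      qed auto
      finally show ?thesis .
    qed
    then have "(f \<otimes>\<^bsub>S\<^esub> h) x = \<zero>\<^bsub>R\<^esub>" by simp
    then show False using x by (simp add: supp_def)
  qed
qed

lemma mult_carrier:
  assumes f: "f \<in> carrier S" and h: "h \<in> carrier S"
  shows "f \<otimes>\<^bsub>S\<^esub> h \<in> carrier S"
proof -
  have "finite (supp (f \<otimes>\<^bsub>S\<^esub> h))" using supp_mult[OF f h] P_fin[OF f h] finite_subset by blast
  moreover have "\<forall>x. (f \<otimes>\<^bsub>S\<^esub> h) x \<in> carrier R"
    using f h by (auto simp: S_mult S_val intro!: R.finsum_closed)
  moreover have "\<forall>x. x \<notin> carrier G \<longrightarrow> (f \<otimes>\<^bsub>S\<^esub> h) x = \<zero>\<^bsub>R\<^esub>" by (simp add: S_mult)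
  ultimately show ?thesis unfolding S_carrier by blast
qed

lemma mult_assoc_S:
  assumes f: "f \<in> carrier S" and h: "h \<in> carrier S" and k: "k \<in> carrier S"
  shows "f \<otimes>\<^bsub>S\<^esub> h \<otimes>\<^bsub>S\<^esub> k = f \<otimes>\<^bsub>S\<^esub> (h \<otimes>\<^bsub>S\<^esub> k)"
proof
  fix x
  show "(f \<otimes>\<^bsub>S\<^esub> h \<otimes>\<^bsub>S\<^esub> k) x = (f \<otimes>\<^bsub>S\<^esub> (h \<otimes>\<^bsub>S\<^esub> k)) x"
  proof (cases "x \<in> carrier G")
    case False
    then show ?thesis by (simp add: S_mult)
  next
    case xG: True
    define A where "A = P f h"
    define B where "B = supp f"
    have Afin: "finite A" and AG: "A \<subseteq> carrier G" using P_fin[OF f h] P_sub by (auto simp: A_def)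
    have Bfin: "finite B" and BG: "B \<subseteq> carrier G" using S_fin[OF f] supp_sub by (auto simp: B_def)
    have fh: "f \<otimes>\<^bsub>S\<^esub> h \<in> carrier S" and hk: "h \<otimes>\<^bsub>S\<^esub> k \<in> carrier S"
      using mult_carrier f h k by auto
    have "(f \<otimes>\<^bsub>S\<^esub> h \<otimes>\<^bsub>S\<^esub> k) x = (\<Oplus>\<^bsub>R\<^esub> a \<in> A. (f \<otimes>\<^bsub>S\<^esub> h) a \<otimes>\<^bsub>R\<^esub> k (inv\<^bsub>G\<^esub> a \<otimes>\<^bsub>G\<^esub> x))"
      by (rule conv[OF fh k Afin _ AG xG]) (simp add: A_def supp_mult f h)
    also have "\<dots> = (\<Oplus>\<^bsub>R\<^esub> a \<in> A. (\<Oplus>\<^bsub>R\<^esub> b \<in> B. f b \<otimes>\<^bsub>R\<^esub> (h (inv\<^bsub>G\<^esub> b \<otimes>\<^bsub>G\<^esub> a) \<otimes>\<^bsub>R\<^esub> k (inv\<^bsub>G\<^esub> a \<otimes>\<^bsub>G\<^esub> x))))"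
    proof (rule R.finsum_cong')
      fix a assume a: "a \<in> A"
      then have aG: "a \<in> carrier G" using AG by blast
      have "(f \<otimes>\<^bsub>S\<^esub> h) a = (\<Oplus>\<^bsub>R\<^esub> b \<in> B. f b \<otimes>\<^bsub>R\<^esub> h (inv\<^bsub>G\<^esub> b \<otimes>\<^bsub>G\<^esub> a))"
        by (rule conv[OF f h Bfin _ BG aG]) (simp add: B_def)
      then show "(f \<otimes>\<^bsub>S\<^esub> h) a \<otimes>\<^bsub>R\<^esub> k (inv\<^bsub>G\<^esub> a \<otimes>\<^bsub>G\<^esub> x) = (\<Oplus>\<^bsub>R\<^esub> b \<in> B. f b \<otimes>\<^bsub>R\<^esub> (h (inv\<^bsub>G\<^esub> b \<otimes>\<^bsub>G\<^esub> a) \<otimes>\<^bsub>R\<^esub> k (inv\<^bsub>G\<^esub> a \<otimes>\<^bsub>G\<^esub> x)))"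
        using Bfin f h k by (simp add: R.finsum_ldistr S_val R.m_assoc)
    qed (auto intro!: R.finsum_closed simp: S_val f h k)
    also have "\<dots> = (\<Oplus>\<^bsub>R\<^esub> b \<in> B. (\<Oplus>\<^bsub>R\<^esub> a \<in> A. f b \<otimes>\<^bsub>R\<^esub> (h (inv\<^bsub>G\<^esub> b \<otimes>\<^bsub>G\<^esub> a) \<otimes>\<^bsub>R\<^esub> k (inv\<^bsub>G\<^esub> a \<otimes>\<^bsub>G\<^esub> x))))"
      by (rule finsum_swap[OF Afin Bfin]) (simp add: S_val f h k)
    also have "\<dots> = (\<Oplus>\<^bsub>R\<^esub> b \<in> B. f b \<otimes>\<^bsub>R\<^esub> (h \<otimes>\<^bsub>S\<^esub> k) (inv\<^bsub>G\<^esub> b \<otimes>\<^bsub>G\<^esub> x))"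
    proof (rule R.finsum_cong')
      fix b assume b: "b \<in> B"
      then have bG: "b \<in> carrier G" using BG by blast
      define C where "C = (\<lambda>a. inv\<^bsub>G\<^esub> b \<otimes>\<^bsub>G\<^esub> a) ` A"
      have Cfin: "finite C" using Afin by (simp add: C_def)
      have CG: "C \<subseteq> carrier G" using AG bG by (auto simp: C_def)
      have hC: "supp h \<subseteq> C"
      proof
        fix c assume c: "c \<in> supp h"
        then have cG: "c \<in> carrier G" by (simp add: supp_def)
        have "b \<otimes>\<^bsub>G\<^esub> c \<in> A" using b c unfolding A_def B_def P_def by force
        moreover have "c = inv\<^bsub>G\<^esub> b \<otimes>\<^bsub>G\<^esub> (b \<otimes>\<^bsub>G\<^esub> c)"
          using bG cG by (simp add: G.m_assoc[symmetric])
        ultimately show "c \<in> C" unfolding C_def by blast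
      qed
      have inj: "inj_on (\<lambda>a. inv\<^bsub>G\<^esub> b \<otimes>\<^bsub>G\<^esub> a) A"
        unfolding inj_on_def using AG bG by (metis G.inv_closed G.l_cancel subsetD)
      have ibx: "inv\<^bsub>G\<^esub> b \<otimes>\<^bsub>G\<^esub> x \<in> carrier G" using bG xG by simp
      have "(h \<otimes>\<^bsub>S\<^esub> k) (inv\<^bsub>G\<^esub> b \<otimes>\<^bsub>G\<^esub> x) = (\<Oplus>\<^bsub>R\<^esub> c \<in> C. h c \<otimes>\<^bsub>R\<^esub> k (inv\<^bsub>G\<^esub> c \<otimes>\<^bsub>G\<^esub> (inv\<^bsub>G\<^esub> b \<otimes>\<^bsub>G\<^esub> x)))"
        by (rule conv[OF h k Cfin hC CG ibx])
      also have "\<dots> = (\<Oplus>\<^bsub>R\<^esub> a \<in> A. h (inv\<^bsub>G\<^esub> b \<otimes>\<^bsub>G\<^esub> a) \<otimes>\<^bsub>R\<^esub> k (inv\<^bsub>G\<^esub> (inv\<^bsub>G\<^esub> b \<otimes>\<^bsub>G\<^esub> a) \<otimes>\<^bsub>G\<^esub> (inv\<^bsub>G\<^esub> b \<otimes>\<^bsub>G\<^esub> x)))"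
        unfolding C_def
        by (rule R.finsum_reindex) (use inj in \<open>auto simp: S_val h k\<close>)
      also have "\<dots> = (\<Oplus>\<^bsub>R\<^esub> a \<in> A. h (inv\<^bsub>G\<^esub> b \<otimes>\<^bsub>G\<^esub> a) \<otimes>\<^bsub>R\<^esub> k (inv\<^bsub>G\<^esub> a \<otimes>\<^bsub>G\<^esub> x))"
      proof (rule R.finsum_cong')
        fix a assume "a \<in> A"
        then have aG: "a \<in> carrier G" using AG by blast
        have bbx: "b \<otimes>\<^bsub>G\<^esub> (inv\<^bsub>G\<^esub> b \<otimes>\<^bsub>G\<^esub> x) = x"
          using bG xG by (simp add: G.m_assoc[symmetric])
        have "inv\<^bsub>G\<^esub> (inv\<^bsub>G\<^esub> b \<otimes>\<^bsub>G\<^esub> a) \<otimes>\<^bsub>G\<^esub> (inv\<^bsub>G\<^esub> b \<otimes>\<^bsub>G\<^esub> x) = inv\<^bsub>G\<^esub> a \<otimes>\<^bsub>G\<^esub> x"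
          using aG bG xG bbx by (simp add: G.inv_mult_group G.m_assoc)
        then show "h (inv\<^bsub>G\<^esub> b \<otimes>\<^bsub>G\<^esub> a) \<otimes>\<^bsub>R\<^esub> k (inv\<^bsub>G\<^esub> (inv\<^bsub>G\<^esub> b \<otimes>\<^bsub>G\<^esub> a) \<otimes>\<^bsub>G\<^esub> (inv\<^bsub>G\<^esub> b \<otimes>\<^bsub>G\<^esub> x)) = h (inv\<^bsub>G\<^esub> b \<otimes>\<^bsub>G\<^esub> a) \<otimes>\<^bsub>R\<^esub> k (inv\<^bsub>G\<^esub> a \<otimes>\<^bsub>G\<^esub> x)"
          by simp
      qed (auto simp: S_val h k)
      finally have eq: "(h \<otimes>\<^bsub>S\<^esub> k) (inv\<^bsub>G\<^esub> b \<otimes>\<^bsub>G\<^esub> x) = (\<Oplus>\<^bsub>R\<^esub> a \<in> A. h (inv\<^bsub>G\<^esub> b \<otimes>\<^bsub>G\<^esub> a) \<otimes>\<^bsub>R\<^esub> k (inv\<^bsub>G\<^esub> a \<otimes>\<^bsub>G\<^esub> x))" .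
      show "(\<Oplus>\<^bsub>R\<^esub> a \<in> A. f b \<otimes>\<^bsub>R\<^esub> (h (inv\<^bsub>G\<^esub> b \<otimes>\<^bsub>G\<^esub> a) \<otimes>\<^bsub>R\<^esub> k (inv\<^bsub>G\<^esub> a \<otimes>\<^bsub>G\<^esub> x))) = f b \<otimes>\<^bsub>R\<^esub> (h \<otimes>\<^bsub>S\<^esub> k) (inv\<^bsub>G\<^esub> b \<otimes>\<^bsub>G\<^esub> x)"
        unfolding eq using Afin f h k by (simp add: R.finsum_rdistr S_val)
    qed (auto simp: S_val f hk)
    also have "\<dots> = (f \<otimes>\<^bsub>S\<^esub> (h \<otimes>\<^bsub>S\<^esub> k)) x"
      by (rule conv[OF f hk Bfin _ BG xG, symmetric]) (simp add: B_def)
    finally show ?thesis .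
  qed
qed

lemma l_distr_S:
  assumes f: "f \<in> carrier S" and h: "h \<in> carrier S" and k: "k \<in> carrier S"
  shows "(f \<oplus>\<^bsub>S\<^esub> h) \<otimes>\<^bsub>S\<^esub> k = f \<otimes>\<^bsub>S\<^esub> k \<oplus>\<^bsub>S\<^esub> h \<otimes>\<^bsub>S\<^esub> k"
proof
  fix x
  show "((f \<oplus>\<^bsub>S\<^esub> h) \<otimes>\<^bsub>S\<^esub> k) x = (f \<otimes>\<^bsub>S\<^esub> k \<oplus>\<^bsub>S\<^esub> h \<otimes>\<^bsub>S\<^esub> k) x"
  proof (cases "x \<in> carrier G")
    case False
    then show ?thesis by (simp add: S_mult S_add)
  next
    case xG: True
    define A where "A = supp f \<union> supp h"
    have Afin: "finite A" and AG: "A \<subseteq> carrier G" using S_fin f h supp_sub by (auto simp: A_def)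
    have fh: "f \<oplus>\<^bsub>S\<^esub> h \<in> carrier S" using add_carrier f h by blast
    have sfh: "supp (f \<oplus>\<^bsub>S\<^esub> h) \<subseteq> A"
      using f h by (auto simp: supp_def S_add S_val A_def)
    have "((f \<oplus>\<^bsub>S\<^esub> h) \<otimes>\<^bsub>S\<^esub> k) x = (\<Oplus>\<^bsub>R\<^esub> a \<in> A. (f \<oplus>\<^bsub>S\<^esub> h) a \<otimes>\<^bsub>R\<^esub> k (inv\<^bsub>G\<^esub> a \<otimes>\<^bsub>G\<^esub> x))"
      by (rule conv[OF fh k Afin sfh AG xG])
    also have "\<dots> = (\<Oplus>\<^bsub>R\<^esub> a \<in> A. f a \<otimes>\<^bsub>R\<^esub> k (inv\<^bsub>G\<^esub> a \<otimes>\<^bsub>G\<^esub> x) \<oplus>\<^bsub>R\<^esub> h a \<otimes>\<^bsub>R\<^esub> k (inv\<^bsub>G\<^esub> a \<otimes>\<^bsub>G\<^esub> x))"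
      by (rule R.finsum_cong') (auto simp: S_add S_val f h k R.l_distr)
    also have "\<dots> = (\<Oplus>\<^bsub>R\<^esub> a \<in> A. f a \<otimes>\<^bsub>R\<^esub> k (inv\<^bsub>G\<^esub> a \<otimes>\<^bsub>G\<^esub> x)) \<oplus>\<^bsub>R\<^esub> (\<Oplus>\<^bsub>R\<^esub> a \<in> A. h a \<otimes>\<^bsub>R\<^esub> k (inv\<^bsub>G\<^esub> a \<otimes>\<^bsub>G\<^esub> x))"
      by (rule R.finsum_addf) (auto simp: S_val f h k)
    also have "\<dots> = (f \<otimes>\<^bsub>S\<^esub> k) x \<oplus>\<^bsub>R\<^esub> (h \<otimes>\<^bsub>S\<^esub> k) x"
      using conv[OF f k Afin _ AG xG] conv[OF h k Afin _ AG xG] by (simp add: A_def)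
    finally show ?thesis by (simp add: S_add)
  qed
qed

lemma r_distr_S:
  assumes f: "f \<in> carrier S" and h: "h \<in> carrier S" and k: "k \<in> carrier S"
  shows "k \<otimes>\<^bsub>S\<^esub> (f \<oplus>\<^bsub>S\<^esub> h) = k \<otimes>\<^bsub>S\<^esub> f \<oplus>\<^bsub>S\<^esub> k \<otimes>\<^bsub>S\<^esub> h"
proof
  fix x
  show "(k \<otimes>\<^bsub>S\<^esub> (f \<oplus>\<^bsub>S\<^esub> h)) x = (k \<otimes>\<^bsub>S\<^esub> f \<oplus>\<^bsub>S\<^esub> k \<otimes>\<^bsub>S\<^esub> h) x"
  proof (cases "x \<in> carrier G")
    case False
    then show ?thesis by (simp add: S_mult S_add)
  next
    case xG: True
    define A where "A = supp k"
    have Afin: "finite A" and AG: "A \<subseteq> carrier G" using S_fin k supp_sub by (auto simp: A_def)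
    have fh: "f \<oplus>\<^bsub>S\<^esub> h \<in> carrier S" using add_carrier f h by blast
    have "(k \<otimes>\<^bsub>S\<^esub> (f \<oplus>\<^bsub>S\<^esub> h)) x = (\<Oplus>\<^bsub>R\<^esub> a \<in> A. k a \<otimes>\<^bsub>R\<^esub> (f \<oplus>\<^bsub>S\<^esub> h) (inv\<^bsub>G\<^esub> a \<otimes>\<^bsub>G\<^esub> x))"
      by (rule conv[OF k fh Afin _ AG xG]) (simp add: A_def)
    also have "\<dots> = (\<Oplus>\<^bsub>R\<^esub> a \<in> A. k a \<otimes>\<^bsub>R\<^esub> f (inv\<^bsub>G\<^esub> a \<otimes>\<^bsub>G\<^esub> x) \<oplus>\<^bsub>R\<^esub> k a \<otimes>\<^bsub>R\<^esub> h (inv\<^bsub>G\<^esub> a \<otimes>\<^bsub>G\<^esub> x))"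
      by (rule R.finsum_cong') (auto simp: S_add S_val f h k R.r_distr)
    also have "\<dots> = (\<Oplus>\<^bsub>R\<^esub> a \<in> A. k a \<otimes>\<^bsub>R\<^esub> f (inv\<^bsub>G\<^esub> a \<otimes>\<^bsub>G\<^esub> x)) \<oplus>\<^bsub>R\<^esub> (\<Oplus>\<^bsub>R\<^esub> a \<in> A. k a \<otimes>\<^bsub>R\<^esub> h (inv\<^bsub>G\<^esub> a \<otimes>\<^bsub>G\<^esub> x))"
      by (rule R.finsum_addf) (auto simp: S_val f h k)
    also have "\<dots> = (k \<otimes>\<^bsub>S\<^esub> f) x \<oplus>\<^bsub>R\<^esub> (k \<otimes>\<^bsub>S\<^esub> h) x"
      using conv[OF k f Afin _ AG xG] conv[OF k h Afin _ AG xG] by (simp add: A_def)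
    finally show ?thesis by (simp add: S_add)
  qed
qed

lemma ring_S: "ring S"
proof (rule ringI)
  show "abelian_group S" by (rule abelian_group_S)
  show "monoid S"
    by (rule monoidI) (auto simp: mult_carrier one_carrier mult_assoc_S l_one_S r_one_S)
qed (auto simp: l_distr_S r_distr_S)

end

context ring
begin

lemma Units_neg: "v \<in> Units R \<Longrightarrow> \<ominus> v \<in> Units R"
proof -
  assume v: "v \<in> Units R"
  have "\<ominus> \<one> \<otimes> v \<in> Units R" using v by (intro Units_m_closed) auto
  moreover have "\<ominus> \<one> \<otimes> v = \<ominus> v" using v by (simp add: l_minus Units_closed)
  ultimately show ?thesis by simp
qed

lemma Delta_carrier: "d \<in> Delta R \<Longrightarrow> d \<in> carrier R"
  by (simp add: Delta_def)

lemma Delta_unit: "d \<in> Delta R \<Longrightarrow> v \<in> Units R \<Longrightarrow> d \<oplus> v \<in> Units R"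
  by (simp add: Delta_def)

lemma Delta_add: "d1 \<in> Delta R \<Longrightarrow> d2 \<in> Delta R \<Longrightarrow> d1 \<oplus> d2 \<in> Delta R"
proof -
  assume d1: "d1 \<in> Delta R" and d2: "d2 \<in> Delta R"
  have c: "d1 \<in> carrier R" "d2 \<in> carrier R" using d1 d2 Delta_carrier by auto
  { fix v assume v: "v \<in> Units R"
    have "d1 \<oplus> d2 \<oplus> v = d1 \<oplus> (d2 \<oplus> v)" using c v by (simp add: a_assoc Units_closed)
    also have "\<dots> \<in> Units R" using d1 d2 v by (simp add: Delta_unit)
    finally have "d1 \<oplus> d2 \<oplus> v \<in> Units R" . }
  then show ?thesis using c by (simp add: Delta_def)
qed

lemma Delta_neg: "d \<in> Delta R \<Longrightarrow> \<ominus> d \<in> Delta R"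
proof -
  assume d: "d \<in> Delta R"
  have c: "d \<in> carrier R" using d Delta_carrier by auto
  { fix v assume v: "v \<in> Units R"
    have vc: "v \<in> carrier R" using v Units_closed by blast
    have "\<ominus> d \<oplus> v = \<ominus> (d \<oplus> \<ominus> v)" using c vc by (simp add: minus_add)
    also have "\<dots> \<in> Units R" using d v by (simp add: Delta_unit Units_neg)
    finally have "\<ominus> d \<oplus> v \<in> Units R" . }
  then show ?thesis using c by (simp add: Delta_def)
qed

lemma Delta_lmult: "d \<in> Delta R \<Longrightarrow> w \<in> Units R \<Longrightarrow> w \<otimes> d \<in> Delta R"
proof -
  assume d: "d \<in> Delta R" and w: "w \<in> Units R"
  have c: "d \<in> carrier R" "w \<in> carrier R" using d w Delta_carrier Units_closed by auto
  { fix v assume v: "v \<in> Units R"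
    have vc: "v \<in> carrier R" using v Units_closed by blast
    have "w \<otimes> d \<oplus> v = w \<otimes> (d \<oplus> inv w \<otimes> v)"
      using c vc w by (simp add: r_distr m_assoc[symmetric] Units_r_inv Units_inv_closed)
    also have "\<dots> \<in> Units R" using d v w by (simp add: Delta_unit Units_m_closed Units_inv_Units)
    finally have "w \<otimes> d \<oplus> v \<in> Units R" . }
  then show ?thesis using c by (simp add: Delta_def)
qed

lemma Delta_rmult: "d \<in> Delta R \<Longrightarrow> w \<in> Units R \<Longrightarrow> d \<otimes> w \<in> Delta R"
proof -
  assume d: "d \<in> Delta R" and w: "w \<in> Units R"
  have c: "d \<in> carrier R" "w \<in> carrier R" using d w Delta_carrier Units_closed by auto
  { fix v assume v: "v \<in> Units R"
    have vc: "v \<in> carrier R" using v Units_closed by blast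
    have "d \<otimes> w \<oplus> v = (d \<oplus> v \<otimes> inv w) \<otimes> w"
      using c vc w by (simp add: l_distr m_assoc Units_l_inv Units_inv_closed)
    also have "\<dots> \<in> Units R" using d v w by (simp add: Delta_unit Units_m_closed Units_inv_Units)
    finally have "d \<otimes> w \<oplus> v \<in> Units R" . }
  then show ?thesis using c by (simp add: Delta_def)
qed

lemma DT_unit_sq:
  assumes DT: "DT_ring R" and u: "u \<in> Units R"
  shows "\<one> \<ominus> u \<otimes> u \<in> Delta R"
proof -
  have uc: "u \<in> carrier R" using u Units_closed by blast
  obtain e d where e: "e \<in> Tr R" and d: "d \<in> Delta R" and ued: "u = e \<oplus> d"
    using DT uc unfolding DT_ring_def by blast
  have ec: "e \<in> carrier R" and dc: "d \<in> carrier R" using e d by (auto simp: Tr_def Delta_def)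
  have "e = \<ominus> d \<oplus> u" by (metis ued r_neg1 a_comm ec dc)
  also have "\<dots> \<in> Units R" using d u by (simp add: Delta_unit Delta_neg)
  finally have eu: "e \<in> Units R" .
  have e3: "e \<otimes> e \<otimes> e = e" using e by (auto simp: Tr_def numeral_3_eq_3)
  have ee: "e \<otimes> e = \<one>"
  proof -
    have "inv e \<otimes> (e \<otimes> e \<otimes> e) = inv e \<otimes> e" using e3 by simp
    then show ?thesis using eu ec by (simp add: m_assoc[symmetric] Units_l_inv Units_inv_closed)
  qed
  define Xs where "Xs = d \<otimes> e \<oplus> u \<otimes> d"
  have Xc: "Xs \<in> carrier R" using dc ec uc by (simp add: Xs_def)
  have h1: "u \<otimes> u = u \<otimes> e \<oplus> u \<otimes> d" by (metis ued r_distr uc ec dc)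
  have h2: "u \<otimes> e = e \<otimes> e \<oplus> d \<otimes> e" by (metis ued l_distr ec dc)
  have "u \<otimes> u = \<one> \<oplus> Xs" unfolding Xs_def h1 h2 ee using dc ec uc by (simp add: a_assoc)
  then have "\<one> \<ominus> u \<otimes> u = \<ominus> Xs" using Xc
    by (simp add: a_minus_def minus_add r_neg2)
  moreover have "Xs \<in> Delta R" unfolding Xs_def
    using d eu u by (intro Delta_add Delta_rmult Delta_lmult)
  ultimately show ?thesis by (simp add: Delta_neg)
qed

end

theorem lemma3p7:
  fixes R :: "('r, 'a) ring_scheme" and G :: "('g, 'b) monoid_scheme"
  assumes "ring R" and "group G" and "DT_ring (group_ring R G)"
  shows "\<forall>g \<in> carrier G.
           \<one>\<^bsub>group_ring R G\<^esub> \<ominus>\<^bsub>group_ring R G\<^esub>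
             (gr_elem R g \<otimes>\<^bsub>group_ring R G\<^esub> gr_elem R g) \<in> Delta (group_ring R G)"
proof
  fix g assume g: "g \<in> carrier G"
  interpret gr: grp_ring R G by (rule grp_ring.intro) (fact assms(1), fact assms(2))
  interpret S: ring "group_ring R G" by (rule gr.ring_S)
  have "gr_elem R g \<in> Units (group_ring R G)"
  proof -
    have ig: "inv\<^bsub>G\<^esub> g \<in> carrier G" using g by simp
    have "gr_elem R (inv\<^bsub>G\<^esub> g) \<otimes>\<^bsub>group_ring R G\<^esub> gr_elem R g = \<one>\<^bsub>group_ring R G\<^esub>"
      using g ig by (simp add: gr.gr_elem_mult gr.S_one)
    moreover have "gr_elem R g \<otimes>\<^bsub>group_ring R G\<^esub> gr_elem R (inv\<^bsub>G\<^esub> g) = \<one>\<^bsub>group_ring R G\<^esub>"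
      using g ig by (simp add: gr.gr_elem_mult gr.S_one)
    ultimately show ?thesis using g ig gr.gr_elem_carrier unfolding Units_def by blast
  qed
  then show "\<one>\<^bsub>group_ring R G\<^esub> \<ominus>\<^bsub>group_ring R G\<^esub>
             (gr_elem R g \<otimes>\<^bsub>group_ring R G\<^esub> gr_elem R g) \<in> Delta (group_ring R G)"
    by (rule S.DT_unit_sq[OF assms(3)])
qed

end
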